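(* Let $\mathcal{S}\subseteq\{0,1\}^N$ be nonempty. The following are equivalent: (1) $\mathcal{S}$ is a lattice (closed under coordinatewise minimum and maximum); (2) $\mathcal{S}$ is the set of minimizers of some submodular function $g:\{0,1\}^N\to\mathbb{R}$; (3) the Hamming distance function $d_{\mathcal{S}}(x)=\min_{y\in\mathcal{S}}\|x-y\|_1$ is submodular.
   Context: A function $g:\{0,1\}^N\to\mathbb{R}$ is submodular if $g(x\vee y)+g(x\wedge y)\le g(x)+g(y)$ for all $x,y$, where $\vee,\wedge$ are coordinatewise max and min. *)

theory Defs
  imports Main Complex_Main
begin

text \<open>Points of {0,1}^N are functions 'n => bool on a finite index type 'n
  (False = 0, True = 1). The pointwise sup / inf on such functions are the
  coordinatewise max / min.\<close>

definition submodular :: "(('n::finite \<Rightarrow> bool) \<Rightarrow> real) \<Rightarrow> bool" where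
  "submodular g \<longleftrightarrow> (\<forall>x y. g (sup x y) + g (inf x y) \<le> g x + g y)"

definition is_lattice_set :: "('n::finite \<Rightarrow> bool) set \<Rightarrow> bool" where
  "is_lattice_set S \<longleftrightarrow> (\<forall>x\<in>S. \<forall>y\<in>S. sup x y \<in> S \<and> inf x y \<in> S)"

definition minimizers :: "(('n::finite \<Rightarrow> bool) \<Rightarrow> real) \<Rightarrow> ('n \<Rightarrow> bool) set" where
  "minimizers g = {x. \<forall>y. g x \<le> g y}"

definition hamming :: "('n::finite \<Rightarrow> bool) \<Rightarrow> ('n \<Rightarrow> bool) \<Rightarrow> nat" where
  "hamming x y = card {i. x i \<noteq> y i}"

definition dist_to_set :: "('n::finite \<Rightarrow> bool) set \<Rightarrow> ('n \<Rightarrow> bool) \<Rightarrow> real" where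
  "dist_to_set S x = Min ((\<lambda>y. real (hamming x y)) ` S)"

end

theory Submission
  imports Defs
begin

lemma ham_sum: "hamming x y = (\<Sum>i\<in>UNIV. if x i \<noteq> y i then 1 else (0::nat))"
  unfolding hamming_def by (simp add: sum.If_cases)

lemma ham_zero: "hamming x y = 0 \<longleftrightarrow> x = y"
  unfolding hamming_def by (auto simp: fun_eq_iff)

lemma fin_img: "finite ((\<lambda>y. real (hamming x y)) ` (S :: ('n::finite \<Rightarrow> bool) set))"
  by simp

lemma d_le: "y \<in> S \<Longrightarrow> dist_to_set S x \<le> real (hamming x y)"
  unfolding dist_to_set_def by (rule Min_le) (simp, rule imageI)

lemma d_ex: "S \<noteq> {} \<Longrightarrow> \<exists>a\<in>S. dist_to_set S x = real (hamming x a)"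
proof -
  assume "S \<noteq> {}"
  then have "dist_to_set S x \<in> (\<lambda>y. real (hamming x y)) ` S"
    unfolding dist_to_set_def by (intro Min_in) simp_all
  then show ?thesis by (rule imageE) blast
qed

lemma d_nonneg: "S \<noteq> {} \<Longrightarrow> dist_to_set S x \<ge> 0"
proof -
  assume "S \<noteq> {}"
  then obtain a where "dist_to_set S x = real (hamming x a)" using d_ex by blast
  then show ?thesis by simp
qed

lemma d_zero: "S \<noteq> {} \<Longrightarrow> dist_to_set S x = 0 \<longleftrightarrow> x \<in> S"
proof
  assume "S \<noteq> {}" "dist_to_set S x = 0"
  then obtain a where "a \<in> S" "real (hamming x a) = 0" using d_ex by metis
  then have "hamming x a = 0" by simp
  then show "x \<in> S" using ham_zero \<open>a \<in> S\<close> by metis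
next
  assume "S \<noteq> {}" "x \<in> S"
  then show "dist_to_set S x = 0" using d_le[of x S x] d_nonneg[of S x] ham_zero[of x x] by auto
qed

lemma bool4: "(if (p \<or> q) \<noteq> (r \<or> s) then 1 else 0) + (if (p \<and> q) \<noteq> (r \<and> s) then 1 else 0)
   \<le> (if p \<noteq> r then 1 else 0) + (if q \<noteq> s then 1 else (0::nat))"
  by (cases p; cases q; cases r; cases s) simp_all

lemma ham_pair: "hamming (sup x y) (sup a b) + hamming (inf x y) (inf a b) \<le> hamming x a + hamming y b"
proof -
  have "hamming (sup x y) (sup a b) + hamming (inf x y) (inf a b)
     = (\<Sum>i\<in>UNIV. (if sup x y i \<noteq> sup a b i then 1 else 0) + (if inf x y i \<noteq> inf a b i then 1 else (0::nat)))"
    by (simp add: ham_sum sum.distrib)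
  also have "\<dots> \<le> (\<Sum>i\<in>UNIV. (if x i \<noteq> a i then 1 else 0) + (if y i \<noteq> b i then 1 else (0::nat)))"
    by (rule sum_mono) (simp only: sup_fun_def inf_fun_def sup_bool_def inf_bool_def bool4)
  also have "\<dots> = hamming x a + hamming y b" by (simp add: ham_sum sum.distrib)
  finally show ?thesis .
qed

lemma min_lattice:
  assumes "submodular g" shows "is_lattice_set (minimizers g)"
  unfolding is_lattice_set_def minimizers_def
proof (intro ballI conjI)
  fix x y assume x: "x \<in> {x. \<forall>y. g x \<le> g y}" and y: "y \<in> {x. \<forall>y. g x \<le> g y}"
  have s: "g (sup x y) + g (inf x y) \<le> g x + g y" using assms unfolding submodular_def by blast
  have "g x \<le> g (sup x y)" "g x \<le> g (inf x y)" "g y \<le> g x" "g x \<le> g y" using x y by auto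
  then have e: "g (sup x y) = g x" "g (inf x y) = g x" using s by linarith+
  show "sup x y \<in> {x. \<forall>y. g x \<le> g y}" using x e by auto
  show "inf x y \<in> {x. \<forall>y. g x \<le> g y}" using x e by auto
qed

lemma d_min: "S \<noteq> {} \<Longrightarrow> minimizers (dist_to_set S) = S"
proof
  assume ne: "S \<noteq> {}"
  show "minimizers (dist_to_set S) \<subseteq> S"
  proof
    fix x assume "x \<in> minimizers (dist_to_set S)"
    then have m: "\<forall>y. dist_to_set S x \<le> dist_to_set S y" unfolding minimizers_def by auto
    obtain s where "s \<in> S" using ne by auto
    then have "dist_to_set S s = 0" using d_zero ne by blast
    then have "dist_to_set S x = 0" using m d_nonneg[OF ne, of x] by (metis order_antisym)
    then show "x \<in> S" using d_zero ne by blast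
  qed
  show "S \<subseteq> minimizers (dist_to_set S)"
  proof
    fix x assume "x \<in> S"
    then have "dist_to_set S x = 0" using d_zero[OF ne] by blast
    then show "x \<in> minimizers (dist_to_set S)"
      unfolding minimizers_def using d_nonneg[OF ne] by auto
  qed
qed

lemma d_sub:
  assumes "S \<noteq> {}" "is_lattice_set S" shows "submodular (dist_to_set S)"
  unfolding submodular_def
proof (intro allI)
  fix x y
  obtain a where a: "a \<in> S" "dist_to_set S x = real (hamming x a)" using d_ex assms(1) by metis
  obtain b where b: "b \<in> S" "dist_to_set S y = real (hamming y b)" using d_ex assms(1) by metis
  have "sup a b \<in> S" "inf a b \<in> S" using a b assms(2) unfolding is_lattice_set_def by auto
  then have "dist_to_set S (sup x y) + dist_to_set S (inf x y)
     \<le> real (hamming (sup x y) (sup a b)) + real (hamming (inf x y) (inf a b))"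
    using d_le[of "sup a b" S "sup x y"] d_le[of "inf a b" S "inf x y"] by linarith
  also have "\<dots> \<le> real (hamming x a) + real (hamming y b)"
    using ham_pair[of x y a b] by linarith
  finally show "dist_to_set S (sup x y) + dist_to_set S (inf x y) \<le> dist_to_set S x + dist_to_set S y"
    using a b by simp
qed

theorem corollary2:
  fixes S :: "('n::finite \<Rightarrow> bool) set"
  assumes "S \<noteq> {}"
  shows "(is_lattice_set S \<longleftrightarrow> (\<exists>g. submodular g \<and> S = minimizers g))
       \<and> (is_lattice_set S \<longleftrightarrow> submodular (dist_to_set S))"
proof -
  have "is_lattice_set S \<Longrightarrow> submodular (dist_to_set S)" using d_sub[OF assms] .
  moreover have "submodular (dist_to_set S) \<Longrightarrow> \<exists>g. submodular g \<and> S = minimizers g"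
    using d_min[OF assms] by metis
  moreover have "\<exists>g. submodular g \<and> S = minimizers g \<Longrightarrow> is_lattice_set S"
    using min_lattice by blast
  ultimately show ?thesis by blast
qed

end
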